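(* Let $a>0$ with $a\neq1$, and let $x>0$, $y>0$. (i) If $x\le 1$ and $a<1$, then $$\Gamma(x,y)\ \ge\ \Big(\frac{a}{e}\Big)^{x-1}\Big(\frac{1-x}{1-a}\Big)^{x-1}\int_0^1 t^{\frac{1-a}{a}}\big(-\ln(1-t)\big)^{y-1}\,dt .$$ (ii) If $x\ge1$, $a>1$ and $y>\frac{a-1}{a}$, then the integral on the right converges and the reverse inequality holds: $$\Gamma(x,y)\ \le\ \Big(\frac{a}{e}\Big)^{x-1}\Big(\frac{1-x}{1-a}\Big)^{x-1}\int_0^1 t^{\frac{1-a}{a}}\big(-\ln(1-t)\big)^{y-1}\,dt .$$ (When $x=1$ the factor $\big(\frac{1-x}{1-a}\big)^{x-1}$ is interpreted as $0^0=1$.)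
   Context: For $x>0,y>0$ the Bigamma function is the (convergent) improper integral $\Gamma(x,y):=\int_0^1(-\ln t)^{x-1}\big(-\ln(1-t)\big)^{y-1}\,dt$. *)

theory Defs
  imports "HOL-Analysis.Analysis"
begin

text \<open>Bigamma function: integral over (0,1) of a nonnegative measurable integrand
  (the improper integral coincides with the Lebesgue integral).\<close>
definition Bigamma :: "real \<Rightarrow> real \<Rightarrow> real" where
  "Bigamma x y = (LBINT t:{0<..<1}. (- ln t) powr (x - 1) * (- ln (1 - t)) powr (y - 1))"

definition powr0 :: "real \<Rightarrow> real \<Rightarrow> real" where
  "powr0 b c = (if c = 0 then 1 else b powr c)"

definition rhs_integrand :: "real \<Rightarrow> real \<Rightarrow> real \<Rightarrow> real" where
  "rhs_integrand a y t = t powr ((1 - a) / a) * (- ln (1 - t)) powr (y - 1)"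

end

theory Submission
  imports Defs
begin

lemma beta_int:
  assumes "\<alpha> > -1" "\<beta> > -1"
  shows "set_integrable lborel {0<..<1::real} (\<lambda>t. t powr \<alpha> * (1-t) powr \<beta>)"
proof -
  have "set_integrable lborel {0..1::real} (\<lambda>t. t powr (\<alpha>+1-1) * (1-t) powr (\<beta>+1-1))"
    by (rule integrable_Beta) (use assms in auto)
  then have "set_integrable lborel {0<..<1::real} (\<lambda>t. t powr (\<alpha>+1-1) * (1-t) powr (\<beta>+1-1))"
    by (rule set_integrable_subset) auto
  then show ?thesis by simp
qed

lemma meas_F: "set_borel_measurable lborel {0<..<1::real} (\<lambda>t. (- ln t) powr (x - 1) * (- ln (1 - t)) powr (y - 1))"
  unfolding set_borel_measurable_def by measurable

lemma meas_G: "set_borel_measurable lborel {0<..<1::real} (rhs_integrand a y)"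
  unfolding set_borel_measurable_def rhs_integrand_def by measurable

lemma log_upper_pow:
  fixes s \<epsilon> y :: real
  assumes "0 < s" "s < 1" "\<epsilon> > 0" "y \<ge> 1"
  shows "(- ln s) powr (y-1) \<le> s powr (-\<epsilon>*(y-1)) / \<epsilon> powr (y-1)"
proof -
  have "ln (s powr (-\<epsilon>)) \<le> s powr (-\<epsilon>) - 1"
    by (rule ln_le_minus_one) (use assms in auto)
  then have "\<epsilon> * (- ln s) \<le> s powr (-\<epsilon>)" using assms by (simp add: ln_powr)
  then have h: "- ln s \<le> s powr (-\<epsilon>) / \<epsilon>" using assms by (simp add: field_simps)
  have "0 \<le> - ln s" using assms by simp
  then have "(- ln s) powr (y-1) \<le> (s powr (-\<epsilon>) / \<epsilon>) powr (y-1)"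
    by (intro powr_mono2) (use assms h in auto)
  also have "\<dots> = s powr (-\<epsilon>*(y-1)) / \<epsilon> powr (y-1)"
    using assms by (simp add: powr_divide powr_powr)
  finally show ?thesis .
qed

lemma intF:
  fixes x y :: real
  assumes "0 < x" "x \<le> 1" "y > 0"
  shows "set_integrable lborel {0<..<1::real} (\<lambda>t. (- ln t) powr (x - 1) * (- ln (1 - t)) powr (y - 1))"
proof (cases "y < 1")
  case True
  show ?thesis
  proof (rule set_integrable_bound[OF beta_int[of "y-1" "x-1"] meas_F])
    show "AE t in lborel. t \<in> {0<..<1} \<longrightarrow>
      norm ((- ln t) powr (x - 1) * (- ln (1 - t)) powr (y - 1)) \<le> norm (t powr (y-1) * (1-t) powr (x-1))"
    proof (rule AE_I2, intro impI)
      fix t :: real assume t: "t \<in> {0<..<1}"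
      have l1: "1 - t \<le> - ln t" using ln_le_minus_one[of t] t by auto
      have l2: "t \<le> - ln (1-t)" using ln_le_minus_one[of "1-t"] t by auto
      have "(- ln t) powr (x - 1) \<le> (1-t) powr (x-1)"
        by (rule powr_mono2') (use assms t l1 in auto)
      moreover have "(- ln (1-t)) powr (y - 1) \<le> t powr (y-1)"
        by (rule powr_mono2') (use True t l2 in auto)
      ultimately have "(- ln t) powr (x - 1) * (- ln (1 - t)) powr (y - 1) \<le> (1-t) powr (x-1) * t powr (y-1)"
        by (intro mult_mono) auto
      then show "norm ((- ln t) powr (x - 1) * (- ln (1 - t)) powr (y - 1)) \<le> norm (t powr (y-1) * (1-t) powr (x-1))"
        by (simp add: mult.commute)
    qed
  qed (use assms in auto)
next
  case False
  define e where "e = x / (2*y)"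
  have e: "e > 0" "e * (y - 1) < x" using assms False unfolding e_def by (auto simp: field_simps intro: add_pos_nonneg)
  have I: "set_integrable lborel {0<..<1::real} (\<lambda>t. (t powr 0 * (1-t) powr (x-1-e*(y-1))) / e powr (y-1))"
    by (intro set_integrable_divide beta_int) (use e in auto)
  show ?thesis
  proof (rule set_integrable_bound[OF I meas_F])
    show "AE t in lborel. t \<in> {0<..<1} \<longrightarrow>
      norm ((- ln t) powr (x - 1) * (- ln (1 - t)) powr (y - 1)) \<le> norm ((t powr 0 * (1-t) powr (x-1-e*(y-1))) / e powr (y-1))"
    proof (rule AE_I2, intro impI)
      fix t :: real assume t: "t \<in> {0<..<1}"
      have l1: "1 - t \<le> - ln t" using ln_le_minus_one[of t] t by auto
      have "(- ln t) powr (x - 1) \<le> (1-t) powr (x-1)"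
        by (rule powr_mono2') (use assms t l1 in auto)
      moreover have "(- ln (1-t)) powr (y - 1) \<le> (1-t) powr (-e*(y-1)) / e powr (y-1)"
        by (rule log_upper_pow) (use t e False in auto)
      ultimately have "(- ln t) powr (x - 1) * (- ln (1 - t)) powr (y - 1) \<le> (1-t) powr (x-1) * ((1-t) powr (-e*(y-1)) / e powr (y-1))"
        by (intro mult_mono) auto
      also have "\<dots> = (t powr 0 * (1-t) powr (x-1-e*(y-1))) / e powr (y-1)"
        using t by (simp add: powr_add[symmetric])
      finally show "norm ((- ln t) powr (x - 1) * (- ln (1 - t)) powr (y - 1)) \<le> norm ((t powr 0 * (1-t) powr (x-1-e*(y-1))) / e powr (y-1))"
        by simp
    qed
  qed
qed

lemma intG:
  fixes a y :: real
  assumes "a > 1" "y > (a - 1) / a"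
  shows "set_integrable lborel {0<..<1::real} (rhs_integrand a y)"
proof -
  define b where "b = (1 - a) / a"
  have b: "b > -1" "b < 0" "y + b > 0" using assms unfolding b_def by (auto simp: field_simps)
  have y0: "y > 0" using b by linarith
  show ?thesis
  proof (cases "y < 1")
    case True
    show ?thesis
    proof (rule set_integrable_bound[OF beta_int[of "b+y-1" "0"] meas_G])
      show "AE t in lborel. t \<in> {0<..<1} \<longrightarrow>
        norm (rhs_integrand a y t) \<le> norm (t powr (b+y-1) * (1-t) powr 0)"
      proof (rule AE_I2, intro impI)
        fix t :: real assume t: "t \<in> {0<..<1}"
        have l2: "t \<le> - ln (1-t)" using ln_le_minus_one[of "1-t"] t by auto
        have "(- ln (1-t)) powr (y - 1) \<le> t powr (y-1)"
          by (rule powr_mono2') (use True t l2 in auto)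
        then have "t powr b * (- ln (1-t)) powr (y - 1) \<le> t powr b * t powr (y-1)"
          by (intro mult_left_mono) auto
        also have "\<dots> = t powr (b+y-1) * (1-t) powr 0" using t by (simp add: powr_add[symmetric] algebra_simps)
        finally show "norm (rhs_integrand a y t) \<le> norm (t powr (b+y-1) * (1-t) powr 0)"
          using t by (simp add: rhs_integrand_def b_def)
      qed
    qed (use b in auto)
  next
    case False
    define e where "e = 1 / (2*y)"
    have e: "e > 0" "e * (y - 1) < 1" using y0 False unfolding e_def by (auto simp: field_simps)
    have I: "set_integrable lborel {0<..<1::real} (\<lambda>t. (t powr b * (1-t) powr (-e*(y-1))) / e powr (y-1))"
      by (intro set_integrable_divide beta_int) (use e b in auto)
    show ?thesis
    proof (rule set_integrable_bound[OF I meas_G])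
      show "AE t in lborel. t \<in> {0<..<1} \<longrightarrow>
        norm (rhs_integrand a y t) \<le> norm ((t powr b * (1-t) powr (-e*(y-1))) / e powr (y-1))"
      proof (rule AE_I2, intro impI)
        fix t :: real assume t: "t \<in> {0<..<1}"
        have "(- ln (1-t)) powr (y - 1) \<le> (1-t) powr (-e*(y-1)) / e powr (y-1)"
          by (rule log_upper_pow) (use t e False in auto)
        then have "t powr b * (- ln (1-t)) powr (y - 1) \<le> t powr b * ((1-t) powr (-e*(y-1)) / e powr (y-1))"
          by (intro mult_left_mono) auto
        then show "norm (rhs_integrand a y t) \<le> norm ((t powr b * (1-t) powr (-e*(y-1))) / e powr (y-1))"
          using t by (simp add: rhs_integrand_def b_def)
      qed
    qed
  qed
qed

lemma key_ln:
  fixes u u0 s b :: real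
  assumes "u > 0" "u0 > 0" "s = -b*u0"
  shows "s \<le> 0 \<Longrightarrow> s*(ln u0 - 1) - b*u \<le> s*ln u"
    and "s \<ge> 0 \<Longrightarrow> s*ln u \<le> s*(ln u0 - 1) - b*u"
proof -
  define w where "w = u / u0"
  have w: "w > 0" "u = w * u0" using assms unfolding w_def by auto
  have lnu: "ln u = ln w + ln u0" using w assms by (simp add: ln_mult)
  have bu: "b*u = -s*w" using w assms by simp
  have lw: "ln w \<le> w - 1" by (rule ln_le_minus_one) (use w in auto)
  have eq: "s*(ln u0 - 1) - b*u - s*ln u = s*(w - 1 - ln w)" using lnu bu by (simp add: algebra_simps)
  show "s \<le> 0 \<Longrightarrow> s*(ln u0 - 1) - b*u \<le> s*ln u"
    using eq lw mult_nonpos_nonneg[of s "w - 1 - ln w"] by linarith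
  show "s \<ge> 0 \<Longrightarrow> s*ln u \<le> s*(ln u0 - 1) - b*u"
    using eq lw mult_nonneg_nonneg[of s "w - 1 - ln w"] by linarith
qed

lemma key_pt:
  fixes a x t :: real
  assumes "a > 0" "a \<noteq> 1" "0 < t" "t < 1"
  defines "C \<equiv> (a / exp 1) powr (x - 1) * powr0 ((1 - x) / (1 - a)) (x - 1)"
  shows "C \<ge> 0"
    and "x \<le> 1 \<Longrightarrow> a < 1 \<Longrightarrow> C * t powr ((1-a)/a) \<le> (-ln t) powr (x-1)"
    and "x \<ge> 1 \<Longrightarrow> a > 1 \<Longrightarrow> (-ln t) powr (x-1) \<le> C * t powr ((1-a)/a)"
proof -
  define b where "b = (1-a)/a"
  define u where "u = - ln t"
  have u: "u > 0" using assms unfolding u_def by simp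
  have tb: "t powr b = exp (- b * u)" using assms unfolding u_def by (simp add: powr_def)
  show "C \<ge> 0" unfolding C_def powr0_def by auto
  {
    assume x1: "x = 1"
    have C1: "C = 1" unfolding C_def powr0_def x1 using assms by simp
    have "(-ln t) powr (x-1) = 1" using u unfolding u_def x1 by simp
    note C1 this
  } note X1 = this
  {
    assume x1: "x \<noteq> 1" and sg: "(x < 1 \<and> a < 1) \<or> (x > 1 \<and> a > 1)"
    define u0 where "u0 = a * (1-x)/(1-a)"
    have u0e: "u0 = a * (x-1)/(a-1)" unfolding u0_def
      by (metis minus_diff_eq minus_divide_divide mult_minus_right)
    have xa: "(x-1)/(a-1) > 0" using sg by (auto simp: zero_less_divide_iff)
    moreover have "u0 = a * ((x-1)/(a-1))" unfolding u0e by simp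
    ultimately have u0: "u0 > 0" using assms by (metis mult_pos_pos)
    have q: "(1-x)/(1-a) > 0" using xa by (metis minus_diff_eq minus_divide_divide)
    have "C = (a/exp 1) powr (x-1) * ((1-x)/(1-a)) powr (x-1)"
      unfolding C_def powr0_def using x1 by simp
    also have "\<dots> = (a / exp 1 * ((1-x)/(1-a))) powr (x-1)"
      using q assms by (subst powr_mult) auto
    also have "a / exp 1 * ((1-x)/(1-a)) = u0 / exp 1" unfolding u0_def by simp
    also have "(u0 / exp 1) powr (x-1) = exp ((x-1) * (ln u0 - 1))"
      using u0 by (simp add: powr_def ln_div)
    finally have Ce: "C = exp ((x-1) * (ln u0 - 1))" .
    have s: "x - 1 = -b*u0" unfolding b_def u0_def using assms by (simp add: field_simps)
    have "C * t powr b = exp ((x-1) * (ln u0 - 1) - b*u)" using Ce tb by (simp add: exp_add[symmetric])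
    moreover have "(-ln t) powr (x-1) = exp ((x-1) * ln u)" using u unfolding u_def by (simp add: powr_def)
    moreover note key_ln[OF u u0 s]
    ultimately have "x \<le> 1 \<Longrightarrow> C * t powr b \<le> (-ln t) powr (x-1)"
        "x \<ge> 1 \<Longrightarrow> (-ln t) powr (x-1) \<le> C * t powr b" by auto
  } note X2 = this
  show "x \<le> 1 \<Longrightarrow> a < 1 \<Longrightarrow> C * t powr ((1-a)/a) \<le> (-ln t) powr (x-1)"
  proof -
    assume h: "x \<le> 1" "a < 1"
    show ?thesis
    proof (cases "x = 1")
      case True
      have "b \<ge> 0" unfolding b_def using h assms by simp
      then have "t powr b \<le> 1" using tb u by (simp add: mult_nonneg_nonneg)
      then show ?thesis using X1[OF True] b_def by simp
    next
      case False
      then show ?thesis using X2[OF False] h b_def by auto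
    qed
  qed
  show "x \<ge> 1 \<Longrightarrow> a > 1 \<Longrightarrow> (-ln t) powr (x-1) \<le> C * t powr ((1-a)/a)"
  proof -
    assume h: "x \<ge> 1" "a > 1"
    show ?thesis
    proof (cases "x = 1")
      case True
      have "b \<le> 0" unfolding b_def using h assms by (simp add: divide_nonpos_pos)
      then have "t powr b \<ge> 1" using tb u by (simp add: mult_nonpos_nonneg)
      then show ?thesis using X1[OF True] b_def by simp
    next
      case False
      then show ?thesis using X2[OF False] h b_def by auto
    qed
  qed
qed

theorem mainTheorem4:
  fixes a x y :: real
  assumes "a > 0" "a \<noteq> 1" "x > 0" "y > 0"
  shows "(x \<le> 1 \<and> a < 1 \<longrightarrow>
           Bigamma x y \<ge> (a / exp 1) powr (x - 1) * powr0 ((1 - x) / (1 - a)) (x - 1)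
                           * (LBINT t:{0<..<1}. rhs_integrand a y t))
       \<and> (x \<ge> 1 \<and> a > 1 \<and> y > (a - 1) / a \<longrightarrow>
           set_integrable lborel {0<..<1::real} (rhs_integrand a y) \<and>
           Bigamma x y \<le> (a / exp 1) powr (x - 1) * powr0 ((1 - x) / (1 - a)) (x - 1)
                           * (LBINT t:{0<..<1}. rhs_integrand a y t))"
proof -
  define C where "C = (a / exp 1) powr (x - 1) * powr0 ((1 - x) / (1 - a)) (x - 1)"
  define F where "F = (\<lambda>t::real. (- ln t) powr (x - 1) * (- ln (1 - t)) powr (y - 1))"
  have BF: "Bigamma x y = (LBINT t:{0<..<1}. F t)" unfolding Bigamma_def F_def ..
  have measCG: "set_borel_measurable lborel {0<..<1::real} (\<lambda>t. C * rhs_integrand a y t)"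
    unfolding set_borel_measurable_def rhs_integrand_def by measurable
  have C0: "C \<ge> 0" unfolding C_def by (rule key_pt(1)[of a "1/2"]) (use assms in auto)
  have CI: "C * (LBINT t:{0<..<1}. rhs_integrand a y t) = (LBINT t:{0<..<1}. C * rhs_integrand a y t)"
    by simp
  have P1: "C * rhs_integrand a y t \<le> F t" if "x \<le> 1" "a < 1" "t \<in> {0<..<1}" for t
  proof -
    have "C * t powr ((1-a)/a) \<le> (-ln t) powr (x-1)"
      unfolding C_def by (rule key_pt(2)) (use that assms in auto)
    then have "C * t powr ((1-a)/a) * (- ln (1 - t)) powr (y - 1) \<le> (-ln t) powr (x-1) * (- ln (1 - t)) powr (y - 1)"
      by (intro mult_right_mono) auto
    then show ?thesis unfolding F_def rhs_integrand_def by (simp add: mult.assoc)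
  qed
  have P2: "F t \<le> C * rhs_integrand a y t" if "x \<ge> 1" "a > 1" "t \<in> {0<..<1}" for t
  proof -
    have "(-ln t) powr (x-1) \<le> C * t powr ((1-a)/a)"
      unfolding C_def by (rule key_pt(3)) (use that assms in auto)
    then have "(-ln t) powr (x-1) * (- ln (1 - t)) powr (y - 1) \<le> C * t powr ((1-a)/a) * (- ln (1 - t)) powr (y - 1)"
      by (intro mult_right_mono) auto
    then show ?thesis unfolding F_def rhs_integrand_def by (simp add: mult.assoc)
  qed
  have G0: "0 \<le> rhs_integrand a y t" for t unfolding rhs_integrand_def by simp
  have F0: "0 \<le> F t" for t unfolding F_def by simp
  have part1: "Bigamma x y \<ge> C * (LBINT t:{0<..<1}. rhs_integrand a y t)" if h: "x \<le> 1" "a < 1"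
  proof -
    have IF: "set_integrable lborel {0<..<1::real} F" unfolding F_def by (rule intF) (use assms h in auto)
    have ICG: "set_integrable lborel {0<..<1::real} (\<lambda>t. C * rhs_integrand a y t)"
    proof (rule set_integrable_bound[OF IF measCG])
      show "AE t in lborel. t \<in> {0<..<1} \<longrightarrow> norm (C * rhs_integrand a y t) \<le> norm (F t)"
        using P1[OF h] C0 G0 F0 by (intro AE_I2) auto
    qed
    show ?thesis unfolding CI BF by (rule set_integral_mono[OF ICG IF P1[OF h]])
  qed
  have part2: "set_integrable lborel {0<..<1::real} (rhs_integrand a y) \<and>
           Bigamma x y \<le> C * (LBINT t:{0<..<1}. rhs_integrand a y t)"
    if h: "x \<ge> 1" "a > 1" "y > (a - 1) / a"
  proof -
    have IG: "set_integrable lborel {0<..<1::real} (rhs_integrand a y)" by (rule intG) (use h in auto)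
    then have ICG: "set_integrable lborel {0<..<1::real} (\<lambda>t. C * rhs_integrand a y t)" by auto
    have IF: "set_integrable lborel {0<..<1::real} F"
    proof (rule set_integrable_bound[OF ICG])
      show "set_borel_measurable lborel {0<..<1} F" unfolding F_def by (rule meas_F)
      show "AE t in lborel. t \<in> {0<..<1} \<longrightarrow> norm (F t) \<le> norm (C * rhs_integrand a y t)"
        using P2[OF h(1,2)] C0 G0 F0 by (intro AE_I2) auto
    qed
    show ?thesis unfolding CI BF using IG set_integral_mono[OF IF ICG P2[OF h(1,2)]] by simp
  qed
  show ?thesis using part1 part2 unfolding C_def by blast
qed

end
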